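(* Let $G$ be a group, $\alpha\colon G^3\to\mathrm{U}(1)$ a normalized 3-cocycle, and $g\in G$ an element of order $n$. Let $\tilde\rho\colon\mathbb{Z}^2\to G$ be the homomorphism with $\tilde\rho(\mathsf e_1)=g$, $\tilde\rho(\mathsf e_2)=1$, and let $\tilde\gamma\colon\mathbb{Z}^2\times\mathbb{Z}^2\to\mathrm{U}(1)$ be a normalized 2-cochain with $d\tilde\gamma=\tilde\rho^*\alpha$ and $\tilde\gamma(\mathsf e_1,\mathsf e_2)=\tilde\gamma(\mathsf e_2,\mathsf e_1)$. For $A=\begin{pmatrix}a&b\\c&d\end{pmatrix}$ in the stabilizer of $\tilde\rho$ in $\mathrm{SL}_2(\mathbb{Z})$ put $$R_{\tilde\rho}(A)=\frac{\tilde\gamma(b\mathsf e_1+d\mathsf e_2,\ a\mathsf e_1+c\mathsf e_2)}{\tilde\gamma(a\mathsf e_1+c\mathsf e_2,\ b\mathsf e_1+d\mathsf e_2)}.$$ Then for $T^n=\begin{pmatrix}1&n\\0&1\end{pmatrix}$, $$R_{\tilde\rho}(T^n)=\prod_{j=0}^{n-1}\alpha(g,g^j,g)^{-1}.$$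
   Context: $\mathsf e_1,\mathsf e_2$ is the standard basis of $\mathbb{Z}^2=\pi_1(\mathbb{T}^2)$; $\mathrm{SL}_2(\mathbb{Z})$ acts on homomorphisms by $(A^*\tilde\rho)(\mathsf e_1)=\tilde\rho(\mathsf e_1)^a\tilde\rho(\mathsf e_2)^c$, $(A^*\tilde\rho)(\mathsf e_2)=\tilde\rho(\mathsf e_1)^b\tilde\rho(\mathsf e_2)^d$, and $T^n$ stabilizes $\tilde\rho$. Group cochain conventions (additive notation in $\mathbb{Z}^2$): $(d\tilde\gamma)(x,y,z)=\tilde\gamma(y,z)\tilde\gamma(x+y,z)^{-1}\tilde\gamma(x,y+z)\tilde\gamma(x,y)^{-1}$ and $\tilde\rho^*\alpha(x,y,z)=\alpha(\tilde\rho x,\tilde\rho y,\tilde\rho z)$; normalized means $\tilde\gamma(0,x)=\tilde\gamma(x,0)=1$. The value $R_{\tilde\rho}(A)$ is the character of the stabilizer describing the mapping-class-group action on the fiber of the Freed–Quinn line over the $G$-bundle with holonomy $\tilde\rho$. *)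

theory Defs
  imports Complex_Main "HOL-Library.Product_Plus" "HOL-Algebra.Multiplicative_Group"
begin

text \<open>U(1)-valued functions are modelled as complex-valued functions with values of norm 1.
  The lattice Z^2 is int \<times> int, with e1 = (1,0), e2 = (0,1).\<close>

definition normalized_3cocycle ::
  "('g, 'b) monoid_scheme \<Rightarrow> ('g \<Rightarrow> 'g \<Rightarrow> 'g \<Rightarrow> complex) \<Rightarrow> bool" where
  "normalized_3cocycle G \<alpha> \<longleftrightarrow>
     (\<forall>x\<in>carrier G. \<forall>y\<in>carrier G. \<forall>z\<in>carrier G. cmod (\<alpha> x y z) = 1) \<and>
     (\<forall>x\<in>carrier G. \<forall>y\<in>carrier G. \<forall>z\<in>carrier G. \<forall>w\<in>carrier G.
        \<alpha> y z w * inverse (\<alpha> (x \<otimes>\<^bsub>G\<^esub> y) z w) * \<alpha> x (y \<otimes>\<^bsub>G\<^esub> z) w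
          * inverse (\<alpha> x y (z \<otimes>\<^bsub>G\<^esub> w)) * \<alpha> x y z = 1) \<and>
     (\<forall>x\<in>carrier G. \<forall>y\<in>carrier G.
        \<alpha> \<one>\<^bsub>G\<^esub> x y = 1 \<and> \<alpha> x \<one>\<^bsub>G\<^esub> y = 1 \<and> \<alpha> x y \<one>\<^bsub>G\<^esub> = 1)"

definition normalized_2cochain :: "(int \<times> int \<Rightarrow> int \<times> int \<Rightarrow> complex) \<Rightarrow> bool" where
  "normalized_2cochain \<gamma> \<longleftrightarrow> (\<forall>x y. cmod (\<gamma> x y) = 1) \<and> (\<forall>x. \<gamma> (0,0) x = 1 \<and> \<gamma> x (0,0) = 1)"

definition cobound2 :: "(int \<times> int \<Rightarrow> int \<times> int \<Rightarrow> complex) \<Rightarrow> int \<times> int \<Rightarrow> int \<times> int \<Rightarrow> int \<times> int \<Rightarrow> complex" where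
  "cobound2 \<gamma> x y z = \<gamma> y z * inverse (\<gamma> (x + y) z) * \<gamma> x (y + z) * inverse (\<gamma> x y)"

definition R_rho :: "(int \<times> int \<Rightarrow> int \<times> int \<Rightarrow> complex) \<Rightarrow> int \<Rightarrow> int \<Rightarrow> int \<Rightarrow> int \<Rightarrow> complex" where
  "R_rho \<gamma> a b c d = \<gamma> (b, d) (a, c) / \<gamma> (a, c) (b, d)"

end

theory Submission
  imports Defs
begin

lemma aux:
  fixes a x y p q b :: complex
  assumes "a*x = y*p" "q*y = b*x"
  shows "b*p*y = q*a*y"
proof -
  have "b*p*y = b*(y*p)" by (simp add: mult_ac)
  also have "... = b*(a*x)" using assms(1) by simp
  also have "... = a*(b*x)" by (simp add: mult_ac)
  also have "... = a*(q*y)" using assms(2) by simp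
  finally show ?thesis by (simp add: mult_ac)
qed

theorem mainTheorem13:
  fixes G :: "('g, 'b) monoid_scheme"
    and \<alpha> :: "'g \<Rightarrow> 'g \<Rightarrow> 'g \<Rightarrow> complex"
    and g :: 'g and n :: nat
    and \<rho> :: "int \<times> int \<Rightarrow> 'g"
    and \<gamma> :: "int \<times> int \<Rightarrow> int \<times> int \<Rightarrow> complex"
  assumes grp: "group G"
    and coc: "normalized_3cocycle G \<alpha>"
    and g_in: "g \<in> carrier G"
    and n_pos: "n > 0"
    and ord_g: "group.ord G g = n"
    and rho_def: "\<And>k l. \<rho> (k, l) = g [^]\<^bsub>G\<^esub> k"
    and gam: "normalized_2cochain \<gamma>"
    and dgam: "\<And>x y z. cobound2 \<gamma> x y z = \<alpha> (\<rho> x) (\<rho> y) (\<rho> z)"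
    and sym12: "\<gamma> (1, 0) (0, 1) = \<gamma> (0, 1) (1, 0)"
  shows "R_rho \<gamma> 1 (int n) 0 1 = (\<Prod>j<n. inverse (\<alpha> g (g [^]\<^bsub>G\<^esub> j) g))"
proof -
  interpret group G by (rule grp)
  have nz: "\<gamma> x y \<noteq> 0" for x y
    using gam unfolding normalized_2cochain_def by (metis norm_zero zero_neq_one)
  have C: "\<gamma> y z * \<gamma> x (y+z) = \<alpha> (\<rho> x) (\<rho> y) (\<rho> z) * \<gamma> (x+y) z * \<gamma> x y" for x y z
  proof -
    have "\<gamma> y z * inverse (\<gamma> (x + y) z) * \<gamma> x (y + z) * inverse (\<gamma> x y) = \<alpha> (\<rho> x) (\<rho> y) (\<rho> z)"
      using dgam[of x y z] unfolding cobound2_def .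
    then show ?thesis using nz[of "x+y" z] nz[of x y] by (auto simp: field_simps)
  qed
  have rk: "\<rho> (int k, l) = g [^]\<^bsub>G\<^esub> k" for k l
    using rho_def by (simp add: int_pow_int)
  have rho1: "\<rho> (1, 0) = g" using rk[of 1 0] g_in by simp
  have r0: "\<rho> (0, l) = \<one>\<^bsub>G\<^esub>" for l using rk[of 0 l] by simp
  have gk: "g [^]\<^bsub>G\<^esub> (k::nat) \<in> carrier G" for k using g_in by simp
  have a1: "\<alpha> \<one>\<^bsub>G\<^esub> x y = 1" "\<alpha> x \<one>\<^bsub>G\<^esub> y = 1" "\<alpha> x y \<one>\<^bsub>G\<^esub> = 1"
    if "x \<in> carrier G" "y \<in> carrier G" for x y
    using coc that unfolding normalized_3cocycle_def by auto
  have h: "\<gamma> (int k, 0) (0, 1) = \<gamma> (0, 1) (int k, 0)" for k :: nat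
  proof (induction k)
    case 0
    then show ?case using gam unfolding normalized_2cochain_def by simp
  next
    case (Suc k)
    have e1: "\<gamma> (1,0) (0,1) * \<gamma> (int k,0) (1,1) = \<gamma> (int k + 1,0) (0,1) * \<gamma> (int k,0) (1,0)"
      using C[of "(1,0)" "(0,1)" "(int k,0)"] rk[of k 0] rho1 r0[of 1] a1 gk g_in by simp
    have e2: "\<gamma> (0,1) (1,0) * \<gamma> (int k,0) (1,1) = \<gamma> (int k,1) (1,0) * \<gamma> (int k,0) (0,1)"
      using C[of "(0,1)" "(1,0)" "(int k,0)"] rk[of k 0] rho1 r0[of 1] a1 gk g_in by simp
    have e3: "\<gamma> (int k,0) (1,0) * \<gamma> (0,1) (int k + 1,0) = \<gamma> (int k,1) (1,0) * \<gamma> (0,1) (int k,0)"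
      using C[of "(int k,0)" "(1,0)" "(0,1)"] rk[of k 0] rho1 r0[of 1] a1 gk g_in by simp
    have "\<gamma> (int k + 1,0) (0,1) * \<gamma> (int k,0) (1,0) = \<gamma> (int k,0) (1,0) * \<gamma> (0,1) (int k + 1,0)"
      using e1 e2 e3 sym12 Suc.IH by metis
    then have "\<gamma> (int k + 1,0) (0,1) = \<gamma> (0,1) (int k + 1,0)"
      using nz[of "(int k,0)" "(1,0)"] by (simp add: mult.commute)
    then show ?case by (simp add: add.commute)
  qed
  have r: "\<gamma> (int k, 0) (1, 0) = \<gamma> (1, 0) (int k, 0) * (\<Prod>j<k. inverse (\<alpha> g (g [^]\<^bsub>G\<^esub> j) g))" for k :: nat
  proof (induction k)
    case 0
    then show ?case using gam unfolding normalized_2cochain_def by simp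
  next
    case (Suc k)
    have e: "\<gamma> (int k,0) (1,0) * \<gamma> (1,0) (int k + 1,0) = \<alpha> g (g [^]\<^bsub>G\<^esub> k) g * \<gamma> (int k + 1,0) (1,0) * \<gamma> (1,0) (int k,0)"
      using C[of "(int k,0)" "(1,0)" "(1,0)"] rk[of k 0] rho1 by (simp add: add.commute)
    have an: "\<alpha> g (g [^]\<^bsub>G\<^esub> k) g \<noteq> 0"
      using coc g_in gk unfolding normalized_3cocycle_def by (metis norm_zero zero_neq_one)
    from e Suc.IH have "\<gamma> (int k + 1,0) (1,0) = \<gamma> (1,0) (int k + 1,0) * ((\<Prod>j<k. inverse (\<alpha> g (g [^]\<^bsub>G\<^esub> j) g)) * inverse (\<alpha> g (g [^]\<^bsub>G\<^esub> k) g))"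
      using an nz[of "(1,0)" "(int k,0)"] by (auto simp: field_simps)
    then show ?case by (simp add: add.commute)
  qed
  have f1: "\<gamma> (int n,0) (1,0) * \<gamma> (0,1) (int n + 1,0) = \<gamma> (int n,1) (1,0) * \<gamma> (0,1) (int n,0)"
    using C[of "(int n,0)" "(1,0)" "(0,1)"] rk[of n 0] rho1 r0[of 1] a1 gk g_in by simp
  have f2: "\<gamma> (int n,0) (0,1) * \<gamma> (1,0) (int n,1) = \<gamma> (int n + 1,0) (0,1) * \<gamma> (1,0) (int n,0)"
    using C[of "(int n,0)" "(0,1)" "(1,0)"] rk[of n 0] rho1 r0[of 1] a1 gk g_in by (simp add: add.commute)
  have hn1: "\<gamma> (0,1) (int n + 1,0) = \<gamma> (int n + 1,0) (0,1)" using h[of "Suc n"] by (simp add: add.commute)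
  have "\<gamma> (int n,1) (1,0) / \<gamma> (1,0) (int n,1) = \<gamma> (int n,0) (1,0) / \<gamma> (1,0) (int n,0)"
  proof -
    have k1: "\<gamma> (int n,0) (1,0) * \<gamma> (int n + 1,0) (0,1) = \<gamma> (0,1) (int n,0) * \<gamma> (int n,1) (1,0)"
      using f1 hn1 by simp
    have k2: "\<gamma> (1,0) (int n,1) * \<gamma> (0,1) (int n,0) = \<gamma> (1,0) (int n,0) * \<gamma> (int n + 1,0) (0,1)"
      using f2 h[of n] by (simp add: mult.commute)
    have "\<gamma> (1,0) (int n,0) * \<gamma> (int n,1) (1,0) * \<gamma> (0,1) (int n,0) = \<gamma> (1,0) (int n,1) * \<gamma> (int n,0) (1,0) * \<gamma> (0,1) (int n,0)"
      using aux[OF k1 k2] by (simp add: mult_ac)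
    then have "\<gamma> (1,0) (int n,0) * \<gamma> (int n,1) (1,0) = \<gamma> (1,0) (int n,1) * \<gamma> (int n,0) (1,0)"
      using nz[of "(0,1)" "(int n,0)"] by simp
    then show ?thesis using nz by (simp add: divide_simps mult_ac)
  qed
  also have "\<dots> = (\<Prod>j<n. inverse (\<alpha> g (g [^]\<^bsub>G\<^esub> j) g))"
    using r[of n] nz[of "(1,0)" "(int n,0)"] by simp
  finally show ?thesis unfolding R_rho_def by simp
qed

end
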